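(* Let $X=(X_n)_{n\in\mathbb{Z}}$ be a stationary sequence of integer-valued random variables. If almost surely $0$ has infinitely many ancestors in the record graph of $X$, then the record graph of $X$ is almost surely connected.
   Context: For a sequence $x=(x_n)_{n\in\mathbb{Z}}$, the record map is $R_x(i)=\inf\{n>i: \sum_{l=i}^{n-1}x_l\ge0\}$ if this set is nonempty, and $R_x(i)=i$ otherwise. The record graph has vertex set $\mathbb{Z}$ and a directed edge $i\to R_x(i)$ whenever $R_x(i)\ne i$; connectivity is in the undirected sense. An ancestor of order $n\ge1$ of $i$ is $R_x^n(i)$ when $R_x^n(i)\neq i$; "infinitely many ancestors" means $R^n_x(i)\ne i$ for all $n\ge1$ (equivalently $R^{n+1}_x(i)>R^n_x(i)$ for all $n\ge 0$). *)

theory Defs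
  imports "HOL-Probability.Probability"
begin

definition record_map :: "(int \<Rightarrow> int) \<Rightarrow> int \<Rightarrow> int" where
  "record_map x i =
     (if {n. n > i \<and> (\<Sum>l\<in>{i..<n}. x l) \<ge> 0} \<noteq> {}
      then (LEAST n. n > i \<and> (\<Sum>l\<in>{i..<n}. x l) \<ge> 0) else i)"

definition record_edges :: "(int \<Rightarrow> int) \<Rightarrow> (int \<times> int) set" where
  "record_edges x = {(i, record_map x i) | i. record_map x i \<noteq> i}"

definition record_graph_connected :: "(int \<Rightarrow> int) \<Rightarrow> bool" where
  "record_graph_connected x \<longleftrightarrow>
     (\<forall>i j. (i, j) \<in> (record_edges x \<union> (record_edges x)\<inverse>)\<^sup>*)"

definition inf_many_ancestors :: "(int \<Rightarrow> int) \<Rightarrow> int \<Rightarrow> bool" where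
  "inf_many_ancestors x i \<longleftrightarrow> (\<forall>n::nat. n \<ge> 1 \<longrightarrow> (record_map x ^^ n) i \<noteq> i)"

definition stationary_int_seq :: "'a measure \<Rightarrow> (int \<Rightarrow> 'a \<Rightarrow> int) \<Rightarrow> bool" where
  "stationary_int_seq M X \<longleftrightarrow>
     distr M (PiM UNIV (\<lambda>_. count_space UNIV)) (\<lambda>\<omega> n. X (n + 1) \<omega>)
   = distr M (PiM UNIV (\<lambda>_. count_space UNIV)) (\<lambda>\<omega> n. X n \<omega>)"

end

theory Submission
  imports Defs
begin

definition Qr :: "(int \<Rightarrow> int) \<Rightarrow> int \<Rightarrow> bool" where
  "Qr x k \<longleftrightarrow> (\<exists>n>k. (\<Sum>l\<in>{k..<n}. x l) \<ge> 0)"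

lemma sum_split_int:
  fixes i j n :: int
  assumes "i \<le> j" "j \<le> n"
  shows "sum x {i..<n} = sum x {i..<j} + sum x {j..<n}"
proof -
  have "{i..<n} = {i..<j} \<union> {j..<n}" using assms by auto
  then show ?thesis by (simp add: sum.union_disjoint ivl_disj_int)
qed

lemma rm_char:
  fixes i n :: int
  assumes "i < n" "sum x {i..<n} \<ge> 0" "\<forall>m. i < m \<and> m < n \<longrightarrow> sum x {i..<m} < 0"
  shows "record_map x i = n"
proof -
  have "(LEAST m. m > i \<and> sum x {i..<m} \<ge> 0) = n"
    apply (rule Least_equality)
    using assms by force+
  then show ?thesis using assms unfolding record_map_def by auto
qed

lemma rm_exists:
  assumes "Qr x i"
  shows "i < record_map x i \<and> sum x {i..<record_map x i} \<ge> 0 \<and>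
         (\<forall>m. i < m \<and> m < record_map x i \<longrightarrow> sum x {i..<m} < 0)"
proof -
  obtain n where n: "n > i" "sum x {i..<n} \<ge> 0" using assms Qr_def by auto
  define P where "P = (\<lambda>d::nat. sum x {i..<i + 1 + int d} \<ge> 0)"
  have "P (nat (n - i - 1))" using n unfolding P_def by simp
  then have P0: "P (LEAST d. P d)" by (rule LeastI)
  define n0 where "n0 = i + 1 + int (LEAST d. P d)"
  have min: "sum x {i..<m} < 0" if "i < m" "m < n0" for m
  proof (rule ccontr)
    assume "\<not> ?thesis"
    then have "P (nat (m - i - 1))" unfolding P_def using that by simp
    then have "(LEAST d. P d) \<le> nat (m - i - 1)" by (rule Least_le)
    then show False using that unfolding n0_def by linarith
  qed
  have "record_map x i = n0"
    apply (rule rm_char) using P0 min unfolding n0_def P_def by auto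
  then show ?thesis using P0 min unfolding n0_def P_def by auto
qed

lemma Qr_iff: "Qr x i \<longleftrightarrow> record_map x i \<noteq> i"
proof (cases "Qr x i")
  case True then show ?thesis using rm_exists[of x i] by auto
next
  case False then show ?thesis unfolding record_map_def Qr_def by auto
qed

lemma nest:
  assumes "Qr x i" "i < j" "j < record_map x i"
  shows "Qr x j \<and> record_map x j \<le> record_map x i"
proof -
  let ?R = "record_map x i"
  note r = rm_exists[OF assms(1)]
  have "sum x {i..<?R} = sum x {i..<j} + sum x {j..<?R}"
    using assms by (intro sum_split_int) auto
  moreover have "sum x {i..<j} < 0" using r assms by auto
  ultimately have s: "sum x {j..<?R} \<ge> 0" using r by linarith
  then have q: "Qr x j" unfolding Qr_def using assms by auto
  note rj = rm_exists[OF q]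
  have "record_map x j \<le> ?R"
  proof (rule ccontr)
    assume "\<not> ?thesis"
    then have "sum x {j..<?R} < 0" using rj assms by auto
    then show False using s by simp
  qed
  then show ?thesis using q by simp
qed

lemma chain:
  assumes all: "\<forall>k. Qr x k" and "i < j" "j \<le> record_map x i"
  shows "(j, record_map x i) \<in> (record_edges x)\<^sup>*"
proof -
  have "\<forall>j. nat (record_map x i - j) = d \<longrightarrow> i < j \<longrightarrow> j \<le> record_map x i
          \<longrightarrow> (j, record_map x i) \<in> (record_edges x)\<^sup>*" for d
  proof (induction d rule: less_induct)
    case (less d)
    show ?case
    proof (intro allI impI)
      fix j assume d: "nat (record_map x i - j) = d" and ij: "i < j" and jr: "j \<le> record_map x i"
      show "(j, record_map x i) \<in> (record_edges x)\<^sup>*"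
      proof (cases "j = record_map x i")
        case True then show ?thesis by simp
      next
        case False
        then have jr': "j < record_map x i" using jr by simp
        have n: "Qr x j \<and> record_map x j \<le> record_map x i" using nest[OF _ ij jr'] all by auto
        have gt: "j < record_map x j" using rm_exists[of x j] n by auto
        have e: "(j, record_map x j) \<in> record_edges x"
          unfolding record_edges_def using gt by auto
        have "(record_map x j, record_map x i) \<in> (record_edges x)\<^sup>*"
          using less.IH[of "nat (record_map x i - record_map x j)"] d gt ij n by auto
        then show ?thesis using e by (meson converse_rtrancl_into_rtrancl)
      qed
    qed
  qed
  then show ?thesis using assms by blast
qed

lemma connected_det:
  assumes all: "\<forall>k. Qr x k"
  shows "record_graph_connected x"
proof -
  let ?E = "record_edges x \<union> (record_edges x)\<inverse>"
  have sub: "(a, b) \<in> ?E\<^sup>* \<and> (b, a) \<in> ?E\<^sup>*" if "(a, b) \<in> (record_edges x)\<^sup>*" for a b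
  proof -
    have "(a, b) \<in> ?E\<^sup>*" using that by (rule rtrancl_mono[THEN subsetD, rotated]) auto
    moreover have "(b, a) \<in> ((record_edges x)\<inverse>)\<^sup>*" using that by (simp add: rtrancl_converse)
    then have "(b, a) \<in> ?E\<^sup>*" by (rule rtrancl_mono[THEN subsetD, rotated]) auto
    ultimately show ?thesis by simp
  qed
  have step: "(i, i + 1) \<in> ?E\<^sup>* \<and> (i + 1, i) \<in> ?E\<^sup>*" for i
  proof -
    have r: "i < record_map x i" using rm_exists[of x i] all by auto
    have e: "(i, record_map x i) \<in> (record_edges x)\<^sup>*"
      unfolding record_edges_def using r by auto
    have c: "(i + 1, record_map x i) \<in> (record_edges x)\<^sup>*" using chain[OF all, of i "i+1"] r by auto
    show ?thesis using sub[OF e] sub[OF c] by (meson rtrancl_trans)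
  qed
  have up: "(i, i + int n) \<in> ?E\<^sup>* \<and> (i + int n, i) \<in> ?E\<^sup>*" for i n
  proof (induction n)
    case 0 then show ?case by simp
  next
    case (Suc n)
    have "i + int (Suc n) = (i + int n) + 1" by simp
    then show ?case using Suc step[of "i + int n"] by (metis rtrancl_trans)
  qed
  show ?thesis unfolding record_graph_connected_def
  proof (intro allI)
    fix i j :: int
    show "(i, j) \<in> ?E\<^sup>*"
    proof (cases "i \<le> j")
      case True then show ?thesis using up[of i "nat (j - i)"] by simp
    next
      case False then show ?thesis using up[of j "nat (i - j)"] by simp
    qed
  qed
qed

lemma Qr_shift: "Qr (\<lambda>n. x (n + m)) k \<longleftrightarrow> Qr x (k + m)"
proof -
  have s: "sum (\<lambda>l. x (l + m)) {k..<n} = sum x {k + m..<n + m}" for n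
  proof -
    have "sum (\<lambda>l. x (l + m)) {k..<n} = sum x ((\<lambda>l. l + m) ` {k..<n})"
      using sum.reindex[of "\<lambda>l. l + m" "{k..<n}" x] by (simp add: inj_on_def o_def)
    moreover have "(\<lambda>l. l + m) ` {k..<n} = {k + m..<n + m}"
      by (auto simp: image_iff intro!: exI[of _ "_ - m"])
    ultimately show ?thesis by simp
  qed
  show ?thesis unfolding Qr_def s
    apply safe
    subgoal for n by (intro exI[of _ "n + m"]) auto
    subgoal for n by (intro exI[of _ "n - m"]) auto
    done
qed

abbreviation "PP \<equiv> (PiM UNIV (\<lambda>_. count_space UNIV) :: (int \<Rightarrow> int) measure)"

lemma sum_meas: "finite S \<Longrightarrow> (\<lambda>x. sum x S) \<in> measurable PP (count_space (UNIV::int set))"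
proof (induction S rule: finite_induct)
  case empty then show ?case by simp
next
  case (insert a S)
  have p: "(\<lambda>x. (x a, sum x S)) \<in> measurable PP (count_space (UNIV::int set) \<Otimes>\<^sub>M count_space UNIV)"
    using insert.IH by (intro measurable_Pair) (auto simp: measurable_component_singleton)
  have "(\<lambda>(u::int, v). u + v) \<in> measurable (count_space UNIV \<Otimes>\<^sub>M count_space UNIV) (count_space UNIV)"
    by (simp add: pair_measure_countable)
  from measurable_compose[OF p this] show ?case using insert by simp
qed

lemma Qr_meas: "{x \<in> space PP. Qr x k} \<in> sets PP"
proof -
  have "{x \<in> space PP. Qr x k} = (\<Union>n\<in>{n. n > k}. {x \<in> space PP. sum x {k..<n} \<ge> 0})"
    unfolding Qr_def by auto
  moreover have "{x \<in> space PP. sum x {k..<n} \<ge> 0} \<in> sets PP" for n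
  proof -
    have "(\<lambda>x. sum x {k..<n}) \<in> measurable PP (count_space UNIV)"
      by (rule sum_meas) simp
    then show ?thesis by measurable
  qed
  ultimately show ?thesis by auto
qed

lemma shift_meas: "(\<lambda>y n. y (n + c)) \<in> measurable PP PP"
  by (rule measurable_PiM_single') (auto simp: measurable_component_singleton)

lemma seq_meas:
  assumes "\<And>n. X n \<in> measurable M (count_space UNIV)"
  shows "(\<lambda>\<omega> n. X (n + c) \<omega>) \<in> measurable M PP"
  by (rule measurable_PiM_single') (auto simp: assms)

lemma stat_iter:
  assumes meas: "\<And>n. X n \<in> measurable M (count_space UNIV)"
    and st: "stationary_int_seq M X"
  shows "distr M PP (\<lambda>\<omega> n. X (n + int m) \<omega>) = distr M PP (\<lambda>\<omega> n. X n \<omega>)"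
proof (induction m)
  case 0 then show ?case by simp
next
  case (Suc m)
  have "distr M PP (\<lambda>\<omega> n. X (n + int (Suc m)) \<omega>)
      = distr M PP ((\<lambda>y n. y (n + int m)) \<circ> (\<lambda>\<omega> n. X (n + 1) \<omega>))"
    by (simp add: o_def add.commute add.left_commute)
  also have "\<dots> = distr (distr M PP (\<lambda>\<omega> n. X (n + 1) \<omega>)) PP (\<lambda>y n. y (n + int m))"
    by (rule distr_distr[symmetric]) (auto intro: shift_meas seq_meas meas)
  also have "\<dots> = distr (distr M PP (\<lambda>\<omega> n. X n \<omega>)) PP (\<lambda>y n. y (n + int m))"
    using st unfolding stationary_int_seq_def by simp
  also have "\<dots> = distr M PP ((\<lambda>y n. y (n + int m)) \<circ> (\<lambda>\<omega> n. X n \<omega>))"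
    using seq_meas[OF meas, where c=0] by (intro distr_distr) (auto intro: shift_meas)
  also have "\<dots> = distr M PP (\<lambda>\<omega> n. X (n + int m) \<omega>)"
    by (simp add: o_def)
  finally show ?case using Suc by simp
qed

lemma AE_shift:
  assumes meas: "\<And>n. X n \<in> measurable M (count_space UNIV)"
    and st: "stationary_int_seq M X"
  shows "(AE \<omega> in M. Qr (\<lambda>n. X n \<omega>) (k + int m)) \<longleftrightarrow> (AE \<omega> in M. Qr (\<lambda>n. X n \<omega>) k)"
proof -
  have "(AE \<omega> in M. Qr (\<lambda>n. X n \<omega>) (k + int m)) \<longleftrightarrow> (AE \<omega> in M. Qr (\<lambda>n. X (n + int m) \<omega>) k)"
  proof -
    have "Qr (\<lambda>n. X (n + int m) \<omega>) k = Qr (\<lambda>n. X n \<omega>) (k + int m)" for \<omega>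
      using Qr_shift[of "\<lambda>n. X n \<omega>" "int m" k] by simp
    then show ?thesis by simp
  qed
  also have "\<dots> \<longleftrightarrow> (AE y in distr M PP (\<lambda>\<omega> n. X (n + int m) \<omega>). Qr y k)"
    by (rule AE_distr_iff[symmetric]) (auto intro: seq_meas meas Qr_meas)
  also have "\<dots> \<longleftrightarrow> (AE y in distr M PP (\<lambda>\<omega> n. X n \<omega>). Qr y k)"
    using stat_iter[OF meas st, of m] by (simp only:)
  also have "\<dots> \<longleftrightarrow> (AE \<omega> in M. Qr (\<lambda>n. X n \<omega>) k)"
    using seq_meas[OF meas, where c=0] by (intro AE_distr_iff) (auto intro: Qr_meas)
  finally show ?thesis .
qed

theorem lemma3p4:
  fixes M :: "'a measure" and X :: "int \<Rightarrow> 'a \<Rightarrow> int"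
  assumes "prob_space M"
    and "\<And>n. X n \<in> measurable M (count_space UNIV)"
    and "stationary_int_seq M X"
    and "AE \<omega> in M. inf_many_ancestors (\<lambda>n. X n \<omega>) 0"
  shows "AE \<omega> in M. record_graph_connected (\<lambda>n. X n \<omega>)"
proof -
  have q0: "AE \<omega> in M. Qr (\<lambda>n. X n \<omega>) 0"
    using assms(4) by eventually_elim (auto simp: inf_many_ancestors_def Qr_iff dest: spec[of _ 1])
  have "AE \<omega> in M. Qr (\<lambda>n. X n \<omega>) k" for k
  proof (cases "k \<ge> 0")
    case True
    then show ?thesis using AE_shift[OF assms(2,3), of 0 "nat k"] q0 by simp
  next
    case False
    then show ?thesis using AE_shift[OF assms(2,3), of k "nat (- k)"] q0 by simp
  qed
  then have "AE \<omega> in M. \<forall>k. Qr (\<lambda>n. X n \<omega>) k" by (simp add: AE_all_countable)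
  then show ?thesis by eventually_elim (rule connected_det)
qed

end
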